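(* If $(X,\delta)$ is an $L_1$-embeddable diversity with induced metric $d(a,b)=\delta(\{a,b\})$, then for every finite $A=\{a_1,\dots,a_k\}\subseteq X$ (with $a_i$ distinct), \[ (|A|-1)\,\delta(A)\le\sum_{1\le i<j\le k}d(a_i,a_j). \]
   Context: A diversity on a set $X$ is a function $\delta$ from finite subsets of $X$ to $\mathbb{R}$ with $\delta(A)\ge 0$, $\delta(A)=0$ whenever $|A|\le 1$ (values $0$ on larger sets are allowed), and $\delta(A\cup B)+\delta(B\cup C)\ge\delta(A\cup C)$ for all finite $A,B,C$ with $B\neq\emptyset$. For a measure space $(\Omega,\mathcal{A},\mu)$, the $L_1$ diversity is $(L_1(\Omega,\mu),\delta_1)$ with $\delta_1(F)=\int_\Omega\max\{|f(\omega)-g(\omega)|:f,g\in F\}\,d\mu(\omega)$ for finite $F$. A diversity $(X,\delta)$ is $L_1$-embeddable if there is a map $\phi$ from $X$ into some $L_1$ diversity with $\delta_1(\phi(A))=\delta(A)$ for all finite $A\subseteq X$. *)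

theory Defs
  imports "HOL-Analysis.Analysis"
begin

definition diversity :: "'a set \<Rightarrow> ('a set \<Rightarrow> real) \<Rightarrow> bool" where
  "diversity X \<delta> \<longleftrightarrow>
     (\<forall>A. A \<subseteq> X \<and> finite A \<longrightarrow> \<delta> A \<ge> 0) \<and>
     (\<forall>A. A \<subseteq> X \<and> finite A \<and> card A \<le> 1 \<longrightarrow> \<delta> A = 0) \<and>
     (\<forall>A B C. A \<subseteq> X \<and> B \<subseteq> X \<and> C \<subseteq> X \<and> finite A \<and> finite B \<and> finite C \<and> B \<noteq> {}
        \<longrightarrow> \<delta> (A \<union> C) \<le> \<delta> (A \<union> B) + \<delta> (B \<union> C))"

text \<open>The L1 diversity on integrable functions of a measure space M
  (elements of L1 represented by integrable functions).\<close>
definition L1_diversity :: "'b measure \<Rightarrow> ('b \<Rightarrow> real) set \<Rightarrow> real" where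
  "L1_diversity M F =
     (if F = {} then 0
      else integral\<^sup>L M (\<lambda>\<omega>. Max {\<bar>f \<omega> - g \<omega>\<bar> | f g. f \<in> F \<and> g \<in> F}))"

definition L1_embedding :: "'a set \<Rightarrow> ('a set \<Rightarrow> real) \<Rightarrow> 'b measure \<Rightarrow> ('a \<Rightarrow> 'b \<Rightarrow> real) \<Rightarrow> bool" where
  "L1_embedding X \<delta> M \<phi> \<longleftrightarrow>
     (\<forall>x\<in>X. integrable M (\<phi> x)) \<and>
     (\<forall>A. A \<subseteq> X \<and> finite A \<longrightarrow> L1_diversity M (\<phi> ` A) = \<delta> A)"

definition induced_metric :: "('a set \<Rightarrow> real) \<Rightarrow> 'a \<Rightarrow> 'a \<Rightarrow> real" where
  "induced_metric \<delta> a b = \<delta> {a, b}"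

end

theory Submission
  imports Defs
begin

lemma nested_step:
  fixes f :: "nat \<Rightarrow> nat \<Rightarrow> real"
  shows "(\<Sum>i\<in>{1..Suc k}. \<Sum>j\<in>{i<..Suc k}. f i j)
       = (\<Sum>i\<in>{1..k}. \<Sum>j\<in>{i<..k}. f i j) + (\<Sum>i\<in>{1..k}. f i (Suc k))"
proof -
  have "(\<Sum>i\<in>{1..Suc k}. \<Sum>j\<in>{i<..Suc k}. f i j) = (\<Sum>i\<in>{1..k}. \<Sum>j\<in>{i<..Suc k}. f i j)"
    by (simp add: sum.cl_ivl_Suc)
  also have "\<dots> = (\<Sum>i\<in>{1..k}. (\<Sum>j\<in>{i<..k}. f i j) + f i (Suc k))"
  proof (rule sum.cong)
    fix i assume "i \<in> {1..k}"
    then have "{i<..Suc k} = insert (Suc k) {i<..k}" by auto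
    then show "(\<Sum>j\<in>{i<..Suc k}. f i j) = (\<Sum>j\<in>{i<..k}. f i j) + f i (Suc k)"
      by simp
  qed simp
  finally show ?thesis by (simp add: sum.distrib)
qed

lemma sum_ge_one_plus:
  fixes g :: "nat \<Rightarrow> real"
  assumes "finite I" "q \<in> I" "\<And>i. i \<in> I \<Longrightarrow> e \<le> g i"
  shows "g q + (real (card I) - 1) * e \<le> sum g I"
proof -
  have s1: "sum g I = g q + sum g (I - {q})" using assms by (simp add: sum.remove)
  have b: "real (card (I - {q})) * e \<le> sum g (I - {q})"
    using assms by (intro sum_bounded_below) auto
  have c: "real (card (I - {q})) = real (card I) - 1"
  proof -
    have ge: "card I \<ge> 1" using assms(1,2) by (metis One_nat_def Suc_leI card_gt_0_iff empty_iff)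
    have "card (I - {q}) = card I - 1" by (rule card_Diff_singleton[OF assms(2)])
    then have "real (card (I - {q})) = real (card I - 1)" by (rule arg_cong)
    also have "\<dots> = real (card I) - real 1" by (rule of_nat_diff[OF ge])
    finally show ?thesis by simp
  qed
  from b have "(real (card I) - 1) * e \<le> sum g (I - {q})" unfolding c .
  then show ?thesis using s1 by linarith
qed

lemma pointwise_ineq:
  fixes x :: "nat \<Rightarrow> real"
  assumes "k \<ge> 1"
  shows "(real k - 1) * (Max (x ` {1..k}) - Min (x ` {1..k}))
           \<le> (\<Sum>i\<in>{1..k}. \<Sum>j\<in>{i<..k}. \<bar>x i - x j\<bar>)"
  using assms
proof (induction k)
  case 0 then show ?case by simp
next
  case (Suc k)
  show ?case
  proof (cases "k = 0")
    case True then show ?thesis by simp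
  next
    case False
    define S where "S = x ` {1..k}"
    define M where "M = Max S"
    define m where "m = Min S"
    define y where "y = x (Suc k)"
    have fin: "finite S" "S \<noteq> {}" using False by (auto simp: S_def)
    have IH: "(real k - 1) * (M - m) \<le> (\<Sum>i\<in>{1..k}. \<Sum>j\<in>{i<..k}. \<bar>x i - x j\<bar>)"
      using Suc.IH False by (simp add: M_def m_def S_def)
    have img: "x ` {1..Suc k} = insert y S" by (auto simp: S_def y_def atLeastAtMostSuc_conv)
    have Mx: "Max (x ` {1..Suc k}) = max y M" unfolding img M_def using fin by (simp add: Max_insert)
    have mx: "Min (x ` {1..Suc k}) = min y m" unfolding img m_def using fin by (simp add: Min_insert)
    have "M \<in> x ` {1..k}" using Max_in[OF fin] by (simp add: M_def S_def)
    then obtain p where p: "p \<in> {1..k}" "x p = M" by (metis imageE)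
    have "m \<in> x ` {1..k}" using Min_in[OF fin] by (simp add: m_def S_def)
    then obtain q where q: "q \<in> {1..k}" "x q = m" by (metis imageE)
    have bnd: "\<And>i. i \<in> {1..k} \<Longrightarrow> m \<le> x i \<and> x i \<le> M"
      using fin by (auto simp: m_def M_def S_def)
    define g where "g i = \<bar>x i - y\<bar>" for i
    have step: "(\<Sum>i\<in>{1..Suc k}. \<Sum>j\<in>{i<..Suc k}. \<bar>x i - x j\<bar>)
       = (\<Sum>i\<in>{1..k}. \<Sum>j\<in>{i<..k}. \<bar>x i - x j\<bar>) + sum g {1..k}"
      unfolding g_def y_def by (rule nested_step)
    have key: "real k * (max y M - min y m) \<le> (real k - 1) * (M - m) + sum g {1..k}"
    proof (cases "M \<le> y")
      case True
      have "g q + (real (card {1..k}) - 1) * (y - M) \<le> sum g {1..k}"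
      proof (rule sum_ge_one_plus)
        fix i assume "i \<in> {1..k}"
        from bnd[OF this] show "y - M \<le> g i" unfolding g_def by linarith
      qed (use q in auto)
      then have "g q + (real k - 1) * (y - M) \<le> sum g {1..k}" by simp
      moreover have "g q = y - m" using q True bnd[OF q(1)] by (auto simp: g_def)
      moreover have mm: "max y M = y" "min y m = m" using True bnd[OF q(1)] q by auto
      moreover have "(real k - 1)*(M-m) + (y-m) + (real k -1)*(y-M) = real k*(y-m)"
        by (simp add: algebra_simps)
      ultimately show ?thesis unfolding mm by linarith
    next
      case False
      show ?thesis
      proof (cases "y \<le> m")
        case True
        have "g p + (real (card {1..k}) - 1) * (m - y) \<le> sum g {1..k}"
        proof (rule sum_ge_one_plus)
          fix i assume "i \<in> {1..k}"
          from bnd[OF this] show "m - y \<le> g i" unfolding g_def by linarith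
        qed (use p in auto)
        then have "g p + (real k - 1) * (m - y) \<le> sum g {1..k}" by simp
        moreover have "g p = M - y" using p True bnd[OF p(1)] by (auto simp: g_def)
        moreover have mm: "max y M = M" "min y m = y" using True False bnd[OF p(1)] p by auto
        moreover have "(real k - 1)*(M-m) + (M-y) + (real k -1)*(m-y) = real k*(M-y)"
          by (simp add: algebra_simps)
        ultimately show ?thesis unfolding mm by linarith
      next
        case False2: False
        have "M - m \<le> sum g {1..k}"
        proof (cases "p = q")
          case True then have "M = m" using p q by simp
          moreover have "0 \<le> sum g {1..k}" by (auto simp: g_def intro: sum_nonneg)
          ultimately show ?thesis by simp
        next
          case pq: False
          have "sum g {p, q} \<le> sum g {1..k}"
            using p q by (intro sum_mono2) (auto simp: g_def)
          moreover have "sum g {p, q} = g p + g q" using pq by simp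
          moreover have "M - m \<le> g p + g q" using p q by (auto simp: g_def)
          ultimately show ?thesis by simp
        qed
        moreover have mm: "max y M = M" "min y m = m" using False False2 by auto
        moreover have "(real k - 1)*(M-m) + (M-m) = real k*(M-m)"
          by (simp add: algebra_simps)
        ultimately show ?thesis unfolding mm by linarith
      qed
    qed
    have rk: "real (Suc k) - 1 = real k" by simp
    show ?thesis
      unfolding Mx mx step rk using key IH by linarith
  qed
qed


lemma Max_pairs:
  fixes x :: "nat \<Rightarrow> real"
  assumes "finite I" "I \<noteq> {}"
  shows "Max {\<bar>x i - x j\<bar> | i j. i \<in> I \<and> j \<in> I} = Max (x ` I) - Min (x ` I)"
proof (rule Max_eqI)
  have "{\<bar>x i - x j\<bar> | i j. i \<in> I \<and> j \<in> I} = (\<lambda>(i,j). \<bar>x i - x j\<bar>) ` (I \<times> I)" by auto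
  then show "finite {\<bar>x i - x j\<bar> | i j. i \<in> I \<and> j \<in> I}" using assms by simp
next
  fix z assume "z \<in> {\<bar>x i - x j\<bar> | i j. i \<in> I \<and> j \<in> I}"
  then obtain i j where ij: "i \<in> I" "j \<in> I" "z = \<bar>x i - x j\<bar>" by blast
  have "x i \<le> Max (x ` I)" "x j \<le> Max (x ` I)" "Min (x ` I) \<le> x i" "Min (x ` I) \<le> x j"
    using ij assms by auto
  then show "z \<le> Max (x ` I) - Min (x ` I)" using ij by linarith
next
  have fin: "finite (x ` I)" "x ` I \<noteq> {}" using assms by auto
  have "Max (x ` I) \<in> x ` I" using Max_in[OF fin] .
  then obtain p where p: "p \<in> I" "x p = Max (x ` I)" by (metis imageE)
  have "Min (x ` I) \<in> x ` I" using Min_in[OF fin] .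
  then obtain q where q: "q \<in> I" "x q = Min (x ` I)" by (metis imageE)
  have "Min (x ` I) \<le> Max (x ` I)" using p(1) p(2) fin(1) by (metis Min_le imageI)
  then have "Max (x ` I) - Min (x ` I) = \<bar>x p - x q\<bar>" using p q by simp
  then show "Max (x ` I) - Min (x ` I) \<in> {\<bar>x i - x j\<bar> | i j. i \<in> I \<and> j \<in> I}"
    using p q by blast
qed

lemma Max_two:
  fixes u v :: "'b \<Rightarrow> real"
  shows "Max {\<bar>f w - g w\<bar> | f g. f \<in> {u, v} \<and> g \<in> {u, v}} = \<bar>u w - v w\<bar>"
proof -
  have "{\<bar>f w - g w\<bar> | f g. f \<in> {u, v} \<and> g \<in> {u, v}} = {0, \<bar>u w - v w\<bar>}"
    by (auto simp: abs_minus_commute) blast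
  then show ?thesis by simp
qed

theorem proposition6:
  fixes X :: "'a set" and \<delta> :: "'a set \<Rightarrow> real"
    and M :: "'b measure" and \<phi> :: "'a \<Rightarrow> 'b \<Rightarrow> real"
    and a :: "nat \<Rightarrow> 'a" and k :: nat
  assumes "diversity X \<delta>"
    and "L1_embedding X \<delta> M \<phi>"
    and "a ` {1..k} \<subseteq> X"
    and "inj_on a {1..k}"
  shows "(real (card (a ` {1..k})) - 1) * \<delta> (a ` {1..k})
           \<le> (\<Sum>i\<in>{1..k}. \<Sum>j\<in>{i<..k}. induced_metric \<delta> (a i) (a j))"
proof (cases "k = 0")
  case True
  have "\<delta> {} = 0" using assms(1) unfolding diversity_def by auto
  then show ?thesis using True by simp
next
  case False
  then have k1: "k \<ge> 1" by simp
  have nonneg: "\<And>A. A \<subseteq> X \<Longrightarrow> finite A \<Longrightarrow> \<delta> A \<ge> 0" using assms(1) unfolding diversity_def by auto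
  have intg: "\<And>x. x \<in> X \<Longrightarrow> integrable M (\<phi> x)"
    and emb: "\<And>A. A \<subseteq> X \<Longrightarrow> finite A \<Longrightarrow> L1_diversity M (\<phi> ` A) = \<delta> A"
    using assms(2) unfolding L1_embedding_def by auto
  have aX: "\<And>i. i \<in> {1..k} \<Longrightarrow> a i \<in> X" using assms(3) by auto
  define A where "A = a ` {1..k}"
  have cardA: "card A = k" using assms(4) by (simp add: A_def card_image)
  define h where "h = (\<lambda>\<omega>. Max {\<bar>f \<omega> - g \<omega>\<bar> | f g. f \<in> \<phi> ` A \<and> g \<in> \<phi> ` A})"
  have AX: "A \<subseteq> X" "finite A" using assms(3) by (auto simp: A_def)
  have ne: "\<not> (\<phi> ` A = {})" using k1 by (auto simp: A_def)
  have "L1_diversity M (\<phi> ` A) = integral\<^sup>L M h"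
    unfolding L1_diversity_def h_def by (simp only: ne if_False)
  then have dA: "\<delta> A = integral\<^sup>L M h" using emb[OF AX] by simp
  define G where "G \<omega> = (\<Sum>i\<in>{1..k}. \<Sum>j\<in>{i<..k}. \<bar>\<phi> (a i) \<omega> - \<phi> (a j) \<omega>\<bar>)" for \<omega>
  have ij: "integrable M (\<lambda>\<omega>. \<bar>\<phi> (a i) \<omega> - \<phi> (a j) \<omega>\<bar>)"
    if "i \<in> {1..k}" "j \<in> {i<..k}" for i j
  proof -
    have "a i \<in> X" "a j \<in> X" using that aX by auto
    then show ?thesis by (intro integrable_abs Bochner_Integration.integrable_diff intg)
  qed
  have Gint: "integrable M G" unfolding G_def
    by (intro Bochner_Integration.integrable_sum ij)
  have dm: "induced_metric \<delta> (a i) (a j) = integral\<^sup>L M (\<lambda>\<omega>. \<bar>\<phi> (a i) \<omega> - \<phi> (a j) \<omega>\<bar>)"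
    if "i \<in> {1..k}" "j \<in> {i<..k}" for i j
  proof -
    have sub: "{a i, a j} \<subseteq> X" using that aX by auto
    have "\<delta> {a i, a j} = L1_diversity M (\<phi> ` {a i, a j})" using emb[OF sub] by simp
    also have "\<dots> = integral\<^sup>L M (\<lambda>\<omega>. \<bar>\<phi> (a i) \<omega> - \<phi> (a j) \<omega>\<bar>)"
      unfolding L1_diversity_def by (simp only: image_insert image_empty insert_not_empty if_False Max_two)
    finally show ?thesis by (simp add: induced_metric_def)
  qed
  have RHS: "(\<Sum>i\<in>{1..k}. \<Sum>j\<in>{i<..k}. induced_metric \<delta> (a i) (a j)) = integral\<^sup>L M G"
  proof -
    have "(\<Sum>i\<in>{1..k}. \<Sum>j\<in>{i<..k}. induced_metric \<delta> (a i) (a j))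
        = (\<Sum>i\<in>{1..k}. \<Sum>j\<in>{i<..k}. integral\<^sup>L M (\<lambda>\<omega>. \<bar>\<phi> (a i) \<omega> - \<phi> (a j) \<omega>\<bar>))"
      by (intro sum.cong refl) (simp add: dm)
    also have "\<dots> = integral\<^sup>L M G"
    proof -
      have inner: "integral\<^sup>L M (\<lambda>\<omega>. \<Sum>j\<in>{i<..k}. \<bar>\<phi> (a i) \<omega> - \<phi> (a j) \<omega>\<bar>)
          = (\<Sum>j\<in>{i<..k}. integral\<^sup>L M (\<lambda>\<omega>. \<bar>\<phi> (a i) \<omega> - \<phi> (a j) \<omega>\<bar>))"
        if "i \<in> {1..k}" for i
        by (rule Bochner_Integration.integral_sum) (rule ij[OF that])
      have inti: "integrable M (\<lambda>\<omega>. \<Sum>j\<in>{i<..k}. \<bar>\<phi> (a i) \<omega> - \<phi> (a j) \<omega>\<bar>)"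
        if "i \<in> {1..k}" for i
        by (rule Bochner_Integration.integrable_sum) (rule ij[OF that])
      have "integral\<^sup>L M G = (\<Sum>i\<in>{1..k}. integral\<^sup>L M (\<lambda>\<omega>. \<Sum>j\<in>{i<..k}. \<bar>\<phi> (a i) \<omega> - \<phi> (a j) \<omega>\<bar>))"
        unfolding G_def by (rule Bochner_Integration.integral_sum) (rule inti)
      also have "\<dots> = (\<Sum>i\<in>{1..k}. \<Sum>j\<in>{i<..k}. integral\<^sup>L M (\<lambda>\<omega>. \<bar>\<phi> (a i) \<omega> - \<phi> (a j) \<omega>\<bar>))"
        by (rule sum.cong[OF refl]) (rule inner)
      finally show ?thesis by simp
    qed
    finally show ?thesis .
  qed
  have pw: "(real k - 1) * h \<omega> \<le> G \<omega>" for \<omega>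
  proof -
    define x where "x i = \<phi> (a i) \<omega>" for i
    have "{\<bar>f \<omega> - g \<omega>\<bar> | f g. f \<in> \<phi> ` A \<and> g \<in> \<phi> ` A}
          = {\<bar>x i - x j\<bar> | i j. i \<in> {1..k} \<and> j \<in> {1..k}}"
      unfolding A_def x_def by blast
    then have "h \<omega> = Max {\<bar>x i - x j\<bar> | i j. i \<in> {1..k} \<and> j \<in> {1..k}}"
      unfolding h_def by (simp only:)
    also have "\<dots> = Max (x ` {1..k}) - Min (x ` {1..k})"
      by (rule Max_pairs) (use k1 in auto)
    finally have "h \<omega> = Max (x ` {1..k}) - Min (x ` {1..k})" .
    then show ?thesis using pointwise_ineq[OF k1, of x] by (simp add: G_def x_def)
  qed
  have main: "(real k - 1) * integral\<^sup>L M h \<le> integral\<^sup>L M G"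
  proof (cases "integrable M h")
    case True
    have "(real k - 1) * integral\<^sup>L M h = integral\<^sup>L M (\<lambda>\<omega>. (real k - 1) * h \<omega>)"
      by (rule integral_mult_right_zero[symmetric])
    also have "\<dots> \<le> integral\<^sup>L M G"
    proof (rule integral_mono)
      show "integrable M (\<lambda>\<omega>. (real k - 1) * h \<omega>)" using True by (rule integrable_mult_right)
      show "integrable M G" by (rule Gint)
      fix \<omega> show "(real k - 1) * h \<omega> \<le> G \<omega>" by (rule pw)
    qed
    finally show ?thesis .
  next
    case False
    have h0: "integral\<^sup>L M h = 0" by (rule not_integrable_integral_eq[OF False])
    have "0 \<le> (\<Sum>i\<in>{1..k}. \<Sum>j\<in>{i<..k}. induced_metric \<delta> (a i) (a j))"
      unfolding induced_metric_def
    proof (intro sum_nonneg)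
      fix i j assume "i \<in> {1..k}" "j \<in> {i<..k}"
      then have "{a i, a j} \<subseteq> X" using aX by auto
      then show "0 \<le> \<delta> {a i, a j}" by (rule nonneg) simp
    qed
    then show ?thesis unfolding h0 RHS by simp
  qed
  show ?thesis unfolding A_def[symmetric] cardA dA RHS by (rule main)
qed

end
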